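(* Each member of $\mathcal{G}_2$ is cycle-extendable.
   Context: A half biwheel is obtained from a path $P$ of even length (possibly a single vertex) with color classes $A,B$, whose ends $u,v$ lie in $A$, by adding a new vertex $h$ (the hub) adjacent to every vertex of $A$; $u,v$ are the corners. $\mathcal{G}_2$ (double half biwheels) consists of the graphs obtained from two disjoint half biwheels $H_0,H_1$, neither isomorphic to $K_2$, with hubs $h_0,h_1$ and corners $u_0,v_0$ and $u_1,v_1$ respectively, by adding the four edges $h_1h_0$, $v_1v_0$, $u_0h_1$ and $h_0u_1$. A matching covered graph (connected, at least two vertices, every edge in a perfect matching) is cycle-extendable if for every even cycle $C$ the graph $G-V(C)$ has a perfect matching. *)

theory Defs
  imports Main
begin

text \<open>Simple graphs are given by a vertex set V :: 'a set and an edge set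
E :: 'a set set (edges are two-element sets).\<close>

definition perfect_matching :: "'a set \<Rightarrow> 'a set set \<Rightarrow> 'a set set \<Rightarrow> bool" where
  "perfect_matching V E M \<longleftrightarrow> M \<subseteq> E \<and> (\<forall>e\<in>M. e \<subseteq> V) \<and> (\<forall>v\<in>V. \<exists>!e. e \<in> M \<and> v \<in> e)"

definition has_perfect_matching :: "'a set \<Rightarrow> 'a set set \<Rightarrow> bool" where
  "has_perfect_matching V E \<longleftrightarrow> (\<exists>M. perfect_matching V E M)"

definition graph_connected :: "'a set \<Rightarrow> 'a set set \<Rightarrow> bool" where
  "graph_connected V E \<longleftrightarrow>
     (\<forall>x\<in>V. \<forall>y\<in>V. (x, y) \<in> {(a, b). a \<in> V \<and> b \<in> V \<and> {a, b} \<in> E}\<^sup>*)"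

definition matching_covered :: "'a set \<Rightarrow> 'a set set \<Rightarrow> bool" where
  "matching_covered V E \<longleftrightarrow> graph_connected V E \<and> 2 \<le> card V \<and> finite V \<and>
     (\<forall>e\<in>E. \<exists>M. perfect_matching V E M \<and> e \<in> M)"

definition is_cycle :: "'a set \<Rightarrow> 'a set set \<Rightarrow> 'a list \<Rightarrow> bool" where
  "is_cycle V E c \<longleftrightarrow> distinct c \<and> 3 \<le> length c \<and> set c \<subseteq> V \<and>
     (\<forall>i < length c. {c ! i, c ! ((i + 1) mod length c)} \<in> E)"

definition is_even_cycle :: "'a set \<Rightarrow> 'a set set \<Rightarrow> 'a list \<Rightarrow> bool" where
  "is_even_cycle V E c \<longleftrightarrow> is_cycle V E c \<and> even (length c)"

definition del_vertices_edges :: "'a set set \<Rightarrow> 'a set \<Rightarrow> 'a set set" where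
  "del_vertices_edges E S = {e \<in> E. e \<inter> S = {}}"

definition cycle_extendable :: "'a set \<Rightarrow> 'a set set \<Rightarrow> bool" where
  "cycle_extendable V E \<longleftrightarrow> matching_covered V E \<and>
     (\<forall>c. is_even_cycle V E c \<longrightarrow>
        has_perfect_matching (V - set c) (del_vertices_edges E (set c)))"

text \<open>Half biwheel on path P = [p_0, ..., p_{2k}] (even length 2k, so odd
number of vertices) with hub h: path edges plus h joined to every p_i with i
even (colour class A containing the ends). Corners: hd P and last P.\<close>
definition hbw_edges :: "'a list \<Rightarrow> 'a \<Rightarrow> 'a set set" where
  "hbw_edges P h =
     {{P ! i, P ! (i + 1)} | i. i + 1 < length P} \<union> {{h, P ! i} | i. i < length P \<and> even i}"

definition is_half_biwheel_path :: "'a list \<Rightarrow> 'a \<Rightarrow> bool" where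
  "is_half_biwheel_path P h \<longleftrightarrow> distinct P \<and> odd (length P) \<and> h \<notin> set P"

text \<open>The class G_2 of double half biwheels (up to isomorphism, i.e. any
labelling of the vertices). Neither half biwheel is K_2, i.e. the path has
at least 3 vertices.\<close>
definition in_G2 :: "'a set \<Rightarrow> 'a set set \<Rightarrow> bool" where
  "in_G2 V E \<longleftrightarrow> (\<exists>P0 h0 P1 h1.
     is_half_biwheel_path P0 h0 \<and> is_half_biwheel_path P1 h1 \<and>
     3 \<le> length P0 \<and> 3 \<le> length P1 \<and>
     (set P0 \<union> {h0}) \<inter> (set P1 \<union> {h1}) = {} \<and>
     V = set P0 \<union> {h0} \<union> set P1 \<union> {h1} \<and>
     E = hbw_edges P0 h0 \<union> hbw_edges P1 h1 \<union>
         {{h1, h0}, {last P1, last P0}, {hd P0, h1}, {h0, hd P1}})"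

end

theory Submission
  imports Defs
begin

lemma pm_union:
  assumes "perfect_matching V1 E M1" "perfect_matching V2 E M2" "V1 \<inter> V2 = {}"
  shows "perfect_matching (V1 \<union> V2) E (M1 \<union> M2)"
proof -
  have a: "M1 \<subseteq> E" "\<forall>e\<in>M1. e \<subseteq> V1" "\<forall>v\<in>V1. \<exists>!e. e \<in> M1 \<and> v \<in> e"
    using assms(1) unfolding perfect_matching_def by auto
  have b: "M2 \<subseteq> E" "\<forall>e\<in>M2. e \<subseteq> V2" "\<forall>v\<in>V2. \<exists>!e. e \<in> M2 \<and> v \<in> e"
    using assms(2) unfolding perfect_matching_def by auto
  have c: "\<exists>!e. e \<in> M1 \<union> M2 \<and> v \<in> e" if v: "v \<in> V1 \<union> V2" for v
  proof (cases "v \<in> V1")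
    case True
    have "\<forall>e'. e' \<in> M2 \<longrightarrow> v \<notin> e'" using b(2) assms(3) True by blast
    then show ?thesis using a(3) True by auto
  next
    case False
    then have T: "v \<in> V2" using v by auto
    have "\<forall>e'. e' \<in> M1 \<longrightarrow> v \<notin> e'" using a(2) False by blast
    then show ?thesis using b(3) T by auto
  qed
  have d: "M1 \<union> M2 \<subseteq> E" using a(1) b(1) by auto
  have e: "\<forall>e\<in>M1 \<union> M2. e \<subseteq> V1 \<union> V2" using a(2) b(2) by blast
  have f: "\<forall>v\<in>V1 \<union> V2. \<exists>!e. e \<in> M1 \<union> M2 \<and> v \<in> e" using c by (intro ballI)
  show ?thesis unfolding perfect_matching_def using d e f by (intro conjI)
qed


lemma pm_edge: "x \<noteq> y \<Longrightarrow> {x,y} \<in> E \<Longrightarrow> perfect_matching {x,y} E {{x,y}}"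
  unfolding perfect_matching_def by auto

lemma pm_empty: "perfect_matching {} E {}"
  unfolding perfect_matching_def by auto

lemma pm_mono: "perfect_matching V E M \<Longrightarrow> E \<subseteq> E' \<Longrightarrow> perfect_matching V E' M"
  unfolding perfect_matching_def by auto

lemma pm_cong: "perfect_matching V E M \<Longrightarrow> V = V' \<Longrightarrow> perfect_matching V' E M"
  by simp

definition pairs :: "'a list \<Rightarrow> nat \<Rightarrow> nat \<Rightarrow> 'a set set" where
  "pairs P i j = {{P ! t, P ! Suc t} | t. i \<le> t \<and> Suc t < j \<and> even (t - i)}"

lemma path_edge: "Suc t < length P \<Longrightarrow> {P ! t, P ! Suc t} \<in> hbw_edges P h"
  unfolding hbw_edges_def by auto

lemma hub_edge: "t < length P \<Longrightarrow> even t \<Longrightarrow> {h, P ! t} \<in> hbw_edges P h"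
  unfolding hbw_edges_def by auto

lemma pm_pairs:
  assumes d: "distinct P" and j: "j \<le> length P" and ij: "i \<le> j" and ev: "even (j - i)"
  shows "perfect_matching ((!) P ` {i..<j}) (hbw_edges P h) (pairs P i j)"
  unfolding perfect_matching_def
proof (intro conjI ballI)
  show "pairs P i j \<subseteq> hbw_edges P h" using j by (auto simp: pairs_def intro!: path_edge)
next
  fix e assume "e \<in> pairs P i j" then show "e \<subseteq> (!) P ` {i..<j}"
    unfolding pairs_def by auto
next
  fix v assume "v \<in> (!) P ` {i..<j}"
  then obtain t where t: "i \<le> t" "t < j" "v = P ! t" by auto
  have inj: "\<And>a b. a < length P \<Longrightarrow> b < length P \<Longrightarrow> P ! a = P ! b \<longleftrightarrow> a = b"
    using d by (simp add: nth_eq_iff_index_eq)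
  show "\<exists>!e. e \<in> pairs P i j \<and> v \<in> e"
  proof (cases "even (t - i)")
    case True
    have tj: "Suc t < j" using True t ev by presburger
    show ?thesis
    proof (rule ex1I[of _ "{P ! t, P ! Suc t}"])
      show "{P ! t, P ! Suc t} \<in> pairs P i j \<and> v \<in> {P ! t, P ! Suc t}"
        unfolding pairs_def using t True tj by auto
    next
      fix e assume "e \<in> pairs P i j \<and> v \<in> e"
      then obtain u where u: "e = {P ! u, P ! Suc u}" "i \<le> u" "Suc u < j" "even (u - i)" "v \<in> e"
        unfolding pairs_def by auto
      have "P ! t = P ! u \<or> P ! t = P ! Suc u" using u t by auto
      then have "t = u \<or> t = Suc u" using inj[of t u] inj[of t "Suc u"] u(3) t(2) j by linarith
      then have "t = u" using u True t by auto
      then show "e = {P ! t, P ! Suc t}" using u by simp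
    qed
  next
    case False
    then have ti: "i < t" using t by (cases "i = t") auto
    then obtain s where s: "t = Suc s" by (cases t) auto
    have es: "even (s - i)" using False ti s by presburger
    show ?thesis
    proof (rule ex1I[of _ "{P ! s, P ! Suc s}"])
      show "{P ! s, P ! Suc s} \<in> pairs P i j \<and> v \<in> {P ! s, P ! Suc s}"
        unfolding pairs_def using t ti s es by auto
    next
      fix e assume "e \<in> pairs P i j \<and> v \<in> e"
      then obtain u where u: "e = {P ! u, P ! Suc u}" "i \<le> u" "Suc u < j" "even (u - i)" "v \<in> e"
        unfolding pairs_def by auto
      have "P ! t = P ! u \<or> P ! t = P ! Suc u" using u t by auto
      then have "t = u \<or> t = Suc u" using inj[of t u] inj[of t "Suc u"] u(3) t(2) j by linarith
      then have "s = u" using u False s by auto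
      then show "e = {P ! s, P ! Suc s}" using u by simp
    qed
  qed
qed

lemma toggle:
  fixes e T g :: "nat \<Rightarrow> bool"
  assumes "\<forall>t. 0<t \<and> t<M \<longrightarrow> (e t \<longleftrightarrow> (e (t-1) \<noteq> T t))"
    "\<forall>t. 0<t \<and> t<M \<longrightarrow> (g t \<longleftrightarrow> (g (t-1) \<noteq> T t))" "e 0 = g 0"
  shows "t < M \<Longrightarrow> e t = g t"
proof (induction t)
  case 0 then show ?case using assms by simp
next
  case (Suc t)
  then have "e t = g t" by simp
  then show ?case using assms(1,2) Suc.prems by (metis diff_Suc_1 zero_less_Suc)
qed

definition goodI :: "(nat \<Rightarrow> bool) \<Rightarrow> nat \<Rightarrow> nat \<Rightarrow> nat \<Rightarrow> bool" where
  "goodI s M i j \<longleftrightarrow> i \<le> j \<and> j \<le> M \<and> even i \<and> even j \<and> (\<forall>t\<le>M. s t \<longleftrightarrow> i \<le> t \<and> t \<le> j)"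

definition badI :: "(nat \<Rightarrow> bool) \<Rightarrow> nat \<Rightarrow> nat \<Rightarrow> nat \<Rightarrow> bool" where
  "badI s M i j \<longleftrightarrow> i < j \<and> j \<le> M \<and> even i \<and> even j \<and> (\<forall>t\<le>M. s t \<longleftrightarrow> t \<le> i \<or> j \<le> t)"

lemma comb:
  fixes e T s :: "nat \<Rightarrow> bool" and M :: nat
  assumes M: "2 \<le> M" "even M"
  and L1: "\<forall>t. 0<t \<and> t<M \<longrightarrow> (e t \<longleftrightarrow> (e (t-1) \<noteq> T t))"
  and L2: "\<forall>t<M. s t \<longleftrightarrow> T t \<or> e t"
  and L3: "s M \<longleftrightarrow> T M \<or> e (M-1)"
  and L4: "xa \<longleftrightarrow> (e 0 \<noteq> T 0)"
  and L5: "xb \<longleftrightarrow> (e (M-1) \<noteq> T M)"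
  and ev: "\<forall>t\<le>M. T t \<longrightarrow> even t"
  and hub: "({t. t \<le> M \<and> T t} = {} \<and> ((sh \<and> ya \<and> yb) \<or> (\<not>sh \<and> \<not>ya \<and> \<not>yb)))
     \<or> (\<exists>p. {t. t \<le> M \<and> T t} = {p} \<and> sh \<and> (ya \<noteq> yb))
     \<or> (\<exists>p q. p < q \<and> {t. t \<le> M \<and> T t} = {p,q} \<and> sh \<and> \<not>ya \<and> \<not>yb)"
  shows "(sh \<and> (\<exists>i j. goodI s M i j))
    \<or> (\<not>sh \<and> (\<forall>t\<le>M. \<not>s t))
    \<or> (((\<not>sh \<and> (\<forall>t\<le>M. s t)) \<or> (sh \<and> (\<forall>t\<le>M. \<not> s t))
         \<or> (sh \<and> (\<exists>i j. badI s M i j)))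
       \<and> ((\<not>ya \<and> \<not>yb \<and> xa \<and> xb) \<or> (ya \<and> yb \<and> \<not>xa \<and> \<not>xb)))"
proof -
  from hub show ?thesis
  proof (elim disjE)
    assume Z0: "{t. t \<le> M \<and> T t} = {} \<and> ((sh \<and> ya \<and> yb) \<or> (\<not>sh \<and> \<not>ya \<and> \<not>yb))"
    then have Z: "{t. t \<le> M \<and> T t} = {}" "(sh \<and> ya \<and> yb) \<or> (\<not>sh \<and> \<not>ya \<and> \<not>yb)" by simp_all
    have Tf: "\<forall>t\<le>M. \<not> T t" using Z(1) by blast
    have eg: "\<forall>t<M. e t = e 0"
    proof (intro allI impI)
      fix t assume "t < M"
      show "e t = e 0"
        by (rule toggle[where T=T and g="\<lambda>_. e 0" and M=M, OF L1 _ _ \<open>t < M\<close>]) (use Tf in auto)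
    qed
    have sf: "\<forall>t\<le>M. s t = e 0"
    proof (intro allI impI)
      fix t assume t: "t \<le> M"
      show "s t = e 0"
      proof (cases "t < M")
        case True then show ?thesis using L2 eg[rule_format, of t] Tf t by auto
      next
        case False then have "t = M" using t by auto
        then show ?thesis using L3 eg[rule_format, of "M-1"] Tf M by auto
      qed
    qed
    have xa: "xa = e 0" using L4 Tf by auto
    have xb: "xb = e 0" using L5 Tf eg[rule_format, of "M-1"] M by auto
    show ?thesis
    proof (cases "e 0")
      case True
      show ?thesis
      proof (cases sh)
        case True
        have "goodI s M 0 M" unfolding goodI_def using sf \<open>e 0\<close> M by auto
        then show ?thesis using True by blast
      next
        case False
        then show ?thesis using sf \<open>e 0\<close> Z(2) xa xb by auto
      qed
    next
      case False
      then show ?thesis using sf Z(2) xa xb by auto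
    qed
  next
    assume "\<exists>p. {t. t \<le> M \<and> T t} = {p} \<and> sh \<and> (ya \<noteq> yb)"
    then obtain p where O: "{t. t \<le> M \<and> T t} = {p}" "sh" "ya \<noteq> yb" by blast
    have Tp: "\<forall>t\<le>M. T t \<longleftrightarrow> t = p" using O(1) by blast
    have pM: "p \<le> M" "even p" using O(1) ev by auto
    define g where "g t = (e 0 \<noteq> (0<p \<and> p \<le> t))" for t
    have eg: "\<forall>t<M. e t = g t"
    proof (intro allI impI)
      fix t assume "t < M"
      show "e t = g t"
        by (rule toggle[where T=T and g=g and M=M, OF L1 _ _ \<open>t < M\<close>]) (use Tp in \<open>auto simp: g_def\<close>)
    qed
    have sf: "\<forall>t\<le>M. s t = (t = p \<or> (e 0 \<noteq> (0<p \<and> p \<le> t)))"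
    proof (intro allI impI)
      fix t assume t: "t \<le> M"
      show "s t = (t = p \<or> (e 0 \<noteq> (0<p \<and> p \<le> t)))"
      proof (cases "t < M")
        case True then show ?thesis using L2 eg[rule_format, of t] Tp t by (auto simp: g_def)
      next
        case False then have "t = M" using t by auto
        then show ?thesis using L3 eg[rule_format, of "M-1"] Tp M pM by (auto simp: g_def)
      qed
    qed
    show ?thesis
    proof (cases "e 0")
      case True
      have "goodI s M 0 (if p = 0 then M else p)" unfolding goodI_def
      proof (intro conjI allI impI)
        fix t assume "t \<le> M"
        then show "s t = (0 \<le> t \<and> t \<le> (if p = 0 then M else p))"
          using sf[rule_format, of t] \<open>e 0\<close> by auto
      qed (use M pM in auto)
      then show ?thesis using O(2) by blast
    next
      case False
      have "goodI s M p (if p = 0 then 0 else M)" unfolding goodI_def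
      proof (intro conjI allI impI)
        fix t assume "t \<le> M"
        then show "s t = (p \<le> t \<and> t \<le> (if p = 0 then 0 else M))"
          using sf[rule_format, of t] \<open>\<not> e 0\<close> pM by auto
      qed (use M pM in auto)
      then show ?thesis using O(2) by blast
    qed
  next
    assume "\<exists>p q. p < q \<and> {t. t \<le> M \<and> T t} = {p,q} \<and> sh \<and> \<not>ya \<and> \<not>yb"
    then obtain p q where Tw: "p < q" "{t. t \<le> M \<and> T t} = {p,q}" "sh" "\<not>ya" "\<not>yb" by blast
    have Tp: "\<forall>t\<le>M. T t \<longleftrightarrow> t = p \<or> t = q" using Tw(2) by blast
    have pM: "q \<le> M" "even p" "even q" using Tw(2) ev Tw(1) by auto
    define g where "g t = (e 0 \<noteq> ((0<p \<and> p \<le> t) \<noteq> (q \<le> t)))" for t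
    have eg: "\<forall>t<M. e t = g t"
    proof (intro allI impI)
      fix t assume "t < M"
      show "e t = g t"
        by (rule toggle[where T=T and g=g and M=M, OF L1 _ _ \<open>t < M\<close>]) (use Tp Tw(1) in \<open>auto simp: g_def\<close>)
    qed
    have sf: "\<forall>t\<le>M. s t = (t = p \<or> t = q \<or> g t)"
    proof (intro allI impI)
      fix t assume t: "t \<le> M"
      show "s t = (t = p \<or> t = q \<or> g t)"
      proof (cases "t < M")
        case True then show ?thesis using L2 eg[rule_format, of t] Tp t by auto
      next
        case False then have "t = M" using t by auto
        then show ?thesis using L3 eg[rule_format, of "M-1"] Tp M pM Tw(1) by (auto simp: g_def)
      qed
    qed
    have xa: "xa = (e 0 \<noteq> (p = 0))" using L4 Tp Tw(1) by auto
    have eM: "e (M-1) = g (M-1)" using eg[rule_format, of "M-1"] M by simp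
    have xb: "xb = (g (M-1) \<noteq> (q = M))" using L5 Tp[rule_format, of M] eM Tw(1) pM by auto
    show ?thesis
    proof (cases "e 0")
      case True
      show ?thesis
      proof (cases "p = 0")
        case True
        have "goodI s M 0 q" unfolding goodI_def
        proof (intro conjI allI impI)
          fix t assume "t \<le> M"
          then show "s t = (0 \<le> t \<and> t \<le> q)"
            using sf[rule_format, of t] \<open>e 0\<close> True Tw(1) pM M by (auto simp: g_def)
        qed (use M pM in auto)
        then show ?thesis using Tw(3) by blast
      next
        case False
        have "badI s M p q" unfolding badI_def
        proof (intro conjI allI impI)
          fix t assume "t \<le> M"
          then show "s t = (t \<le> p \<or> q \<le> t)"
            using sf[rule_format, of t] \<open>e 0\<close> False Tw(1) pM M by (auto simp: g_def)
        qed (use M pM Tw(1) in auto)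
        moreover have "xa \<and> xb" using xa xb \<open>e 0\<close> False Tw(1) pM M by (auto simp: g_def)
        ultimately show ?thesis using Tw(3,4,5) by blast
      qed
    next
      case False
      show ?thesis
      proof (cases "p = 0")
        case True
        have "badI s M 0 q" unfolding badI_def
        proof (intro conjI allI impI)
          fix t assume "t \<le> M"
          then show "s t = (t \<le> 0 \<or> q \<le> t)"
            using sf[rule_format, of t] \<open>\<not> e 0\<close> True Tw(1) pM M by (auto simp: g_def)
        qed (use M pM Tw(1) in auto)
        moreover have "xa \<and> xb" using xa xb \<open>\<not> e 0\<close> True Tw(1) pM M by (auto simp: g_def)
        ultimately show ?thesis using Tw(3,4,5) by blast
      next
        case False
        have "goodI s M p q" unfolding goodI_def
        proof (intro conjI allI impI)
          fix t assume "t \<le> M"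
          then show "s t = (p \<le> t \<and> t \<le> q)"
            using sf[rule_format, of t] \<open>\<not> e 0\<close> False Tw(1) pM M by (auto simp: g_def)
        qed (use M pM Tw(1) in auto)
        then show ?thesis using Tw(3) by blast
      qed
    qed
  qed
qed


lemma set_nth_img: "set P = (!) P ` {t. t < length P}"
  by (auto simp: in_set_conv_nth)

lemma side_split:
  assumes "h \<notin> set P"
  shows "S \<inter> (set P \<union> {h}) = (if h \<in> S then {h} else {}) \<union> (!) P ` {t. t < length P \<and> P ! t \<in> S}"
    and "(set P \<union> {h}) - S = (if h \<in> S then {} else {h}) \<union> (!) P ` {t. t < length P \<and> P ! t \<notin> S}"
  using assms by (auto simp: in_set_conv_nth)

lemma card_side:
  assumes d: "distinct P" and h: "h \<notin> set P"
  shows "card (S \<inter> (set P \<union> {h})) = (if h \<in> S then 1 else 0) + card {t. t < length P \<and> P ! t \<in> S}"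
proof -
  have inj: "inj_on ((!) P) {t. t < length P \<and> P ! t \<in> S}"
    using d by (auto simp: inj_on_def nth_eq_iff_index_eq)
  have ci: "card ((!) P ` {t. t < length P \<and> P ! t \<in> S}) = card {t. t < length P \<and> P ! t \<in> S}"
    using card_image[OF inj] .
  have hn: "h \<notin> (!) P ` {t. t < length P \<and> P ! t \<in> S}" using h by auto
  show ?thesis
  proof (cases "h \<in> S")
    case True
    then show ?thesis unfolding side_split(1)[OF h] using ci hn by simp
  next
    case False
    then show ?thesis unfolding side_split(1)[OF h] using ci by simp
  qed
qed

lemma inj_nth_img_disj:
  assumes "distinct P" "A \<inter> B = {}" "\<forall>t\<in>A. t < length P" "\<forall>t\<in>B. t < length P"
  shows "(!) P ` A \<inter> (!) P ` B = {}"
  using assms by (auto simp: nth_eq_iff_index_eq)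

lemma shape_G1:
  assumes d: "distinct P" and oP: "odd (length P)" and h: "h \<notin> set P"
    and hS: "h \<notin> S" and s: "\<forall>t<length P. P ! t \<notin> S"
  shows "has_perfect_matching ((set P \<union> {h}) - S) (hbw_edges P h) \<and> even (card (S \<inter> (set P \<union> {h})))"
proof
  have p0: "0 < length P" using oP by (cases P) auto
  have T: "{t. t < length P \<and> P ! t \<notin> S} = insert 0 {1..<length P}" using s p0 by auto
  have R: "(set P \<union> {h}) - S = {h, P ! 0} \<union> (!) P ` {1..<length P}"
    unfolding side_split(2)[OF h] T using hS by auto
  have m1: "perfect_matching {h, P ! 0} (hbw_edges P h) {{h, P ! 0}}"
    by (rule pm_edge) (use h p0 hub_edge[of 0 P h] in auto)
  have m2: "perfect_matching ((!) P ` {1..<length P}) (hbw_edges P h) (pairs P 1 (length P))"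
    by (rule pm_pairs) (use d oP p0 in \<open>auto simp: Suc_le_eq\<close>)
  have dj: "{h, P ! 0} \<inter> (!) P ` {1..<length P} = {}"
    using h d p0 by (auto simp: nth_eq_iff_index_eq)
  show "has_perfect_matching ((set P \<union> {h}) - S) (hbw_edges P h)"
    unfolding has_perfect_matching_def R using pm_union[OF m1 m2 dj] by blast
next
  have E0: "{t. t < length P \<and> P ! t \<in> S} = {}" using s by auto
  show "even (card (S \<inter> (set P \<union> {h})))" using card_side[OF d h, of S, unfolded E0] hS by simp
qed


lemma shape_G2:
  assumes d: "distinct P" and oP: "odd (length P)" and h: "h \<notin> set P"
    and hS: "h \<in> S" and g: "goodI (\<lambda>t. P ! t \<in> S) (length P - 1) i j"
  shows "has_perfect_matching ((set P \<union> {h}) - S) (hbw_edges P h) \<and> even (card (S \<inter> (set P \<union> {h})))"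
proof
  have p0: "0 < length P" using oP by (cases P) auto
  have gi: "i \<le> j" "j \<le> length P - 1" "even i" "even j"
    using g unfolding goodI_def by auto
  have gs: "P ! t \<in> S \<longleftrightarrow> i \<le> t \<and> t \<le> j" if "t < length P" for t
  proof -
    have "t \<le> length P - 1" using that by simp
    then show ?thesis using g unfolding goodI_def by blast
  qed
  have T: "{t. t < length P \<and> P ! t \<notin> S} = {0..<i} \<union> {Suc j..<length P}"
  proof (intro set_eqI iffI)
    fix t assume "t \<in> {t. t < length P \<and> P ! t \<notin> S}"
    then show "t \<in> {0..<i} \<union> {Suc j..<length P}" using gs[of t] by auto
  next
    fix t assume a: "t \<in> {0..<i} \<union> {Suc j..<length P}"
    then have "t < length P" using gi p0 by auto
    then show "t \<in> {t. t < length P \<and> P ! t \<notin> S}" using gs[of t] a by auto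
  qed
  have R: "(set P \<union> {h}) - S = (!) P ` {0..<i} \<union> (!) P ` {Suc j..<length P}"
    unfolding side_split(2)[OF h] T using hS by auto
  have m1: "perfect_matching ((!) P ` {0..<i}) (hbw_edges P h) (pairs P 0 i)"
    by (rule pm_pairs) (use d gi in auto)
  have m2: "perfect_matching ((!) P ` {Suc j..<length P}) (hbw_edges P h) (pairs P (Suc j) (length P))"
  proof (rule pm_pairs)
    show "Suc j \<le> length P" using gi p0 by linarith
    then show "even (length P - Suc j)" using gi oP by simp
  qed (use d in auto)
  have dj: "(!) P ` {0..<i} \<inter> (!) P ` {Suc j..<length P} = {}"
    by (rule inj_nth_img_disj) (use d gi in auto)
  show "has_perfect_matching ((set P \<union> {h}) - S) (hbw_edges P h)"
    unfolding has_perfect_matching_def R using pm_union[OF m1 m2 dj] by blast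
next
  have gi: "i \<le> j" "j \<le> length P - 1" "even i" "even j"
    using g unfolding goodI_def by auto
  have gs: "P ! t \<in> S \<longleftrightarrow> i \<le> t \<and> t \<le> j" if "t < length P" for t
  proof -
    have "t \<le> length P - 1" using that by simp
    then show ?thesis using g unfolding goodI_def by blast
  qed
  have E0: "{t. t < length P \<and> P ! t \<in> S} = {i..j}"
  proof (intro set_eqI iffI)
    fix t assume "t \<in> {t. t < length P \<and> P ! t \<in> S}"
    then show "t \<in> {i..j}" using gs[of t] by auto
  next
    fix t assume a: "t \<in> {i..j}"
    then have "t < length P" using gi oP by (cases P) auto
    then show "t \<in> {t. t < length P \<and> P ! t \<in> S}" using gs[of t] a by auto
  qed
  show "even (card (S \<inter> (set P \<union> {h})))" using card_side[OF d h, of S, unfolded E0] hS gi by simp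
qed

lemma shape_B1:
  assumes d: "distinct P" and oP: "odd (length P)" and h: "h \<notin> set P"
    and hS: "h \<notin> S" and s: "\<forall>t\<le>length P - 1. P ! t \<in> S"
  shows "odd (card (S \<inter> (set P \<union> {h})))"
proof -
  have p0: "0 < length P" using oP by (cases P) auto
  have E0: "{t. t < length P \<and> P ! t \<in> S} = {..<length P}" using s p0 by auto
  show ?thesis using card_side[OF d h, of S, unfolded E0] hS oP by simp
qed

lemma shape_B2:
  assumes d: "distinct P" and oP: "odd (length P)" and h: "h \<notin> set P"
    and hS: "h \<in> S" and s: "\<forall>t\<le>length P - 1. P ! t \<notin> S"
  shows "odd (card (S \<inter> (set P \<union> {h})))"
proof -
  have p0: "0 < length P" using oP by (cases P) auto
  have E0: "{t. t < length P \<and> P ! t \<in> S} = {}" using s p0 by auto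
  show ?thesis using card_side[OF d h, of S, unfolded E0] hS by simp
qed

lemma shape_B3:
  assumes d: "distinct P" and oP: "odd (length P)" and h: "h \<notin> set P"
    and hS: "h \<in> S" and g: "badI (\<lambda>t. P ! t \<in> S) (length P - 1) i j"
  shows "odd (card (S \<inter> (set P \<union> {h})))"
proof -
  have p0: "0 < length P" using oP by (cases P) auto
  have gi: "i < j" "j \<le> length P - 1" "even i" "even j"
    using g unfolding badI_def by auto
  have gs: "P ! t \<in> S \<longleftrightarrow> t \<le> i \<or> j \<le> t" if "t < length P" for t
  proof -
    have "t \<le> length P - 1" using that by simp
    then show ?thesis using g unfolding badI_def by blast
  qed
  have E0: "{t. t < length P \<and> P ! t \<in> S} = {..i} \<union> {j..<length P}"
  proof (intro set_eqI iffI)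
    fix t assume "t \<in> {t. t < length P \<and> P ! t \<in> S}"
    then show "t \<in> {..i} \<union> {j..<length P}" using gs[of t] by auto
  next
    fix t assume a: "t \<in> {..i} \<union> {j..<length P}"
    then have "t < length P" using gi p0 by auto
    then show "t \<in> {t. t < length P \<and> P ! t \<in> S}" using gs[of t] a by auto
  qed
  have c: "card ({..i} \<union> {j..<length P}) = Suc i + (length P - j)"
    by (subst card_Un_disjoint) (use gi in auto)
  show ?thesis using card_side[OF d h, of S, unfolded E0 c] hS gi oP p0 by auto
qed


lemma exactly_two:
  assumes "card A = 2" "A \<subseteq> {x,y,z}" "x \<noteq> y" "x \<noteq> z" "y \<noteq> z"
  shows "(x\<in>A \<and> y\<in>A \<and> z\<notin>A) \<or> (x\<in>A \<and> y\<notin>A \<and> z\<in>A) \<or> (x\<notin>A \<and> y\<in>A \<and> z\<in>A)"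
proof -
  obtain a b where ab: "A = {a,b}" "a \<noteq> b" using assms(1) by (meson card_2_iff)
  then show ?thesis using assms(2-5) by auto
qed

lemma side:
  fixes P :: "'a list" and h y1 y2 o0 ot :: 'a and S :: "'a set" and Nc :: "'a \<Rightarrow> 'a set"
  assumes d: "distinct P" and oP: "odd (length P)" and lP: "3 \<le> length P" and hP: "h \<notin> set P"
    and out: "y1 \<notin> set P" "y1 \<noteq> h" "y2 \<notin> set P" "y2 \<noteq> h" "o0 \<notin> set P" "o0 \<noteq> h"
      "ot \<notin> set P" "ot \<noteq> h" "y1 \<noteq> y2"
    and NcS: "\<And>v. v \<in> S \<Longrightarrow> card (Nc v) = 2"
    and NcN: "\<And>v. v \<notin> S \<Longrightarrow> Nc v = {}"
    and sym: "\<And>u v. u \<in> Nc v \<longleftrightarrow> v \<in> Nc u"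
    and nbP: "\<And>t u. t < length P \<Longrightarrow> u \<in> Nc (P ! t) \<Longrightarrow>
       (0 < t \<and> u = P ! (t - 1)) \<or> (Suc t < length P \<and> u = P ! Suc t) \<or> (even t \<and> u = h)
       \<or> (t = 0 \<and> u = o0) \<or> (t = length P - 1 \<and> u = ot)"
    and nbh: "\<And>u. u \<in> Nc h \<Longrightarrow> (\<exists>t<length P. even t \<and> u = P ! t) \<or> u = y1 \<or> u = y2"
  shows "(has_perfect_matching ((set P \<union> {h}) - S) (hbw_edges P h) \<and> even (card (S \<inter> (set P \<union> {h}))))
    \<or> (odd (card (S \<inter> (set P \<union> {h}))) \<and>
        ((y1 \<notin> Nc h \<and> y2 \<notin> Nc h \<and> o0 \<in> Nc (P ! 0) \<and> ot \<in> Nc (P ! (length P - 1)))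
         \<or> (y1 \<in> Nc h \<and> y2 \<in> Nc h \<and> o0 \<notin> Nc (P ! 0) \<and> ot \<notin> Nc (P ! (length P - 1)))))"
proof -
  define M where "M = length P - 1"
  have M2: "2 \<le> M" "even M" "length P = Suc M" using lP oP unfolding M_def by auto
  define e where "e t = (P ! Suc t \<in> Nc (P ! t))" for t
  define T where "T t = (h \<in> Nc (P ! t))" for t
  define s where "s t = (P ! t \<in> S)" for t
  have inj: "\<And>a b. a < length P \<Longrightarrow> b < length P \<Longrightarrow> P ! a = P ! b \<longleftrightarrow> a = b"
    using d by (simp add: nth_eq_iff_index_eq)
  have inP: "\<And>a. a < length P \<Longrightarrow> P ! a \<in> set P" by simp
  have hne: "\<And>a. a < length P \<Longrightarrow> P ! a \<noteq> h" using hP inP by metis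
  have int: "(s t \<longrightarrow> (let A = Nc (P ! t) in (P!(t-1)\<in>A \<and> h\<in>A \<and> P!Suc t\<notin>A) \<or> (P!(t-1)\<in>A \<and> h\<notin>A \<and> P!Suc t\<in>A) \<or> (P!(t-1)\<notin>A \<and> h\<in>A \<and> P!Suc t\<in>A)))
      \<and> (\<not> s t \<longrightarrow> Nc (P ! t) = {})" if t: "0 < t" "t < M" for t
  proof (intro conjI impI)
    assume st: "s t"
    have sub: "Nc (P ! t) \<subseteq> {P!(t-1), h, P!Suc t}"
    proof
      fix u assume "u \<in> Nc (P ! t)"
      then show "u \<in> {P!(t-1), h, P!Suc t}" using nbP[of t u] t M2 by auto
    qed
    have "P!(t-1) \<noteq> P!Suc t" using inj[of "t-1" "Suc t"] t M2 by auto
    then show "let A = Nc (P ! t) in (P!(t-1)\<in>A \<and> h\<in>A \<and> P!Suc t\<notin>A) \<or> (P!(t-1)\<in>A \<and> h\<notin>A \<and> P!Suc t\<in>A) \<or> (P!(t-1)\<notin>A \<and> h\<in>A \<and> P!Suc t\<in>A)"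
      unfolding Let_def
      by (intro exactly_two[OF NcS sub]) (use st hne t M2 s_def in auto)
  next
    assume "\<not> s t" then show "Nc (P ! t) = {}" using NcN s_def by auto
  qed
  have at0: "(s 0 \<longrightarrow> (let A = Nc (P ! 0) in (P!1\<in>A \<and> h\<in>A \<and> o0\<notin>A) \<or> (P!1\<in>A \<and> h\<notin>A \<and> o0\<in>A) \<or> (P!1\<notin>A \<and> h\<in>A \<and> o0\<in>A)))
      \<and> (\<not> s 0 \<longrightarrow> Nc (P ! 0) = {})"
  proof (intro conjI impI)
    assume st: "s 0"
    have sub: "Nc (P ! 0) \<subseteq> {P!1, h, o0}"
    proof
      fix u assume "u \<in> Nc (P ! 0)"
      then show "u \<in> {P!1, h, o0}" using nbP[of 0 u] M2 by auto
    qed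
    have "P!1 \<noteq> o0" using out inP[of 1] M2 by auto
    then show "let A = Nc (P ! 0) in (P!1\<in>A \<and> h\<in>A \<and> o0\<notin>A) \<or> (P!1\<in>A \<and> h\<notin>A \<and> o0\<in>A) \<or> (P!1\<notin>A \<and> h\<in>A \<and> o0\<in>A)"
      unfolding Let_def
      by (intro exactly_two[OF NcS sub]) (use st hne M2 s_def out in auto)
  next
    assume "\<not> s 0" then show "Nc (P ! 0) = {}" using NcN s_def by auto
  qed
  have atM: "(s M \<longrightarrow> (let A = Nc (P ! M) in (P!(M-1)\<in>A \<and> h\<in>A \<and> ot\<notin>A) \<or> (P!(M-1)\<in>A \<and> h\<notin>A \<and> ot\<in>A) \<or> (P!(M-1)\<notin>A \<and> h\<in>A \<and> ot\<in>A)))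
      \<and> (\<not> s M \<longrightarrow> Nc (P ! M) = {})"
  proof (intro conjI impI)
    assume st: "s M"
    have sub: "Nc (P ! M) \<subseteq> {P!(M-1), h, ot}"
    proof
      fix u assume "u \<in> Nc (P ! M)"
      then show "u \<in> {P!(M-1), h, ot}" using nbP[of M u] M2 by auto
    qed
    have "P!(M-1) \<noteq> ot" using out inP[of "M-1"] M2 by auto
    then show "let A = Nc (P ! M) in (P!(M-1)\<in>A \<and> h\<in>A \<and> ot\<notin>A) \<or> (P!(M-1)\<in>A \<and> h\<notin>A \<and> ot\<in>A) \<or> (P!(M-1)\<notin>A \<and> h\<in>A \<and> ot\<in>A)"
      unfolding Let_def
      by (intro exactly_two[OF NcS sub]) (use st hne M2 s_def out in auto)
  next
    assume "\<not> s M" then show "Nc (P ! M) = {}" using NcN s_def by auto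
  qed
  have L1: "\<forall>t. 0<t \<and> t<M \<longrightarrow> (e t \<longleftrightarrow> (e (t-1) \<noteq> T t))"
  proof (intro allI impI)
    fix t assume t: "0 < t \<and> t < M"
    have ep: "e (t-1) \<longleftrightarrow> P!(t-1) \<in> Nc (P ! t)" unfolding e_def using t sym by simp
    show "e t \<longleftrightarrow> (e (t-1) \<noteq> T t)" unfolding ep using int[of t] t unfolding e_def T_def Let_def by auto
  qed
  have L2: "\<forall>t<M. s t \<longleftrightarrow> T t \<or> e t"
  proof (intro allI impI)
    fix t assume t: "t < M"
    show "s t \<longleftrightarrow> T t \<or> e t"
    proof (cases "t = 0")
      case True then show ?thesis using at0 unfolding e_def T_def Let_def by auto
    next
      case False then show ?thesis using int[of t] t unfolding e_def T_def Let_def by auto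
    qed
  qed
  have eM: "e (M-1) \<longleftrightarrow> P!(M-1) \<in> Nc (P ! M)" unfolding e_def using M2 sym by simp
  have L3: "s M \<longleftrightarrow> T M \<or> e (M-1)" using atM unfolding eM T_def Let_def by auto
  have L4: "(o0 \<in> Nc (P ! 0)) \<longleftrightarrow> (e 0 \<noteq> T 0)" using at0 unfolding e_def T_def Let_def by auto
  have L5: "(ot \<in> Nc (P ! M)) \<longleftrightarrow> (e (M-1) \<noteq> T M)" using atM unfolding eM T_def Let_def by auto
  have ev: "\<forall>t\<le>M. T t \<longrightarrow> even t"
  proof (intro allI impI)
    fix t assume "t \<le> M" "T t"
    then have tl: "t < length P" using M2 by simp
    have "t - 1 < length P" using tl by linarith
    then have n1: "h \<noteq> P!(t-1)" using hne by metis
    have n2: "Suc t < length P \<longrightarrow> h \<noteq> P ! Suc t" using hne by auto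
    show "even t" using nbP[OF tl, of h] \<open>T t\<close> out n1 n2 unfolding T_def by auto
  qed
  have TT: "\<And>t. t \<le> M \<Longrightarrow> T t \<longleftrightarrow> P ! t \<in> Nc h" unfolding T_def using sym by blast
  have hub: "({t. t \<le> M \<and> T t} = {} \<and> ((h \<in> S \<and> y1 \<in> Nc h \<and> y2 \<in> Nc h) \<or> (h \<notin> S \<and> y1 \<notin> Nc h \<and> y2 \<notin> Nc h)))
     \<or> (\<exists>p. {t. t \<le> M \<and> T t} = {p} \<and> h \<in> S \<and> ((y1 \<in> Nc h) \<noteq> (y2 \<in> Nc h)))
     \<or> (\<exists>p q. p < q \<and> {t. t \<le> M \<and> T t} = {p,q} \<and> h \<in> S \<and> y1 \<notin> Nc h \<and> y2 \<notin> Nc h)"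
  proof (cases "h \<in> S")
    case False
    then have "Nc h = {}" using NcN by auto
    then have "{t. t \<le> M \<and> T t} = {}" using TT by auto
    then show ?thesis using False \<open>Nc h = {}\<close> by auto
  next
    case True
    obtain u w where uw: "Nc h = {u, w}" "u \<noteq> w" using NcS[OF True] by (meson card_2_iff)
    have cu: "(\<exists>t<length P. even t \<and> u = P ! t) \<or> u = y1 \<or> u = y2" using nbh uw by auto
    have cw: "(\<exists>t<length P. even t \<and> w = P ! t) \<or> w = y1 \<or> w = y2" using nbh uw by auto
    have yP: "\<And>a. a < length P \<Longrightarrow> P ! a \<noteq> y1 \<and> P ! a \<noteq> y2" using out inP by metis
    show ?thesis
    proof (cases "\<exists>t<length P. even t \<and> u = P ! t")
      case True
      then obtain p where p: "p < length P" "u = P ! p" by blast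
      show ?thesis
      proof (cases "\<exists>t<length P. even t \<and> w = P ! t")
        case True
        then obtain q where q: "q < length P" "w = P ! q" by blast
        have pq: "p \<noteq> q" using uw p q by auto
        have S2: "{t. t \<le> M \<and> T t} = {p,q}"
        proof (intro set_eqI iffI)
          fix t assume "t \<in> {t. t \<le> M \<and> T t}"
          then have "t < length P" "P ! t = P ! p \<or> P ! t = P ! q" using TT uw p q M2 by auto
          then show "t \<in> {p,q}" using inj p q by auto
        next
          fix t assume "t \<in> {p,q}"
          then show "t \<in> {t. t \<le> M \<and> T t}" using TT uw p q M2 by auto
        qed
        have ny: "y1 \<notin> Nc h" "y2 \<notin> Nc h" using uw p q yP by auto
        show ?thesis
        proof (cases "p < q")
          case True then show ?thesis using S2 ny \<open>h \<in> S\<close> by blast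
        next
          case False
          then have "q < p" using pq by auto
          moreover have "{t. t \<le> M \<and> T t} = {q,p}" using S2 by auto
          ultimately show ?thesis using ny \<open>h \<in> S\<close> by blast
        qed
      next
        case False
        then have wy: "w = y1 \<or> w = y2" using cw by auto
        have S1: "{t. t \<le> M \<and> T t} = {p}"
        proof (intro set_eqI iffI)
          fix t assume "t \<in> {t. t \<le> M \<and> T t}"
          then have "t < length P" "P ! t = P ! p \<or> P ! t = w" using TT uw p M2 by auto
          then show "t \<in> {p}" using inj p yP wy by auto
        next
          fix t assume "t \<in> {p}"
          then show "t \<in> {t. t \<le> M \<and> T t}" using TT uw p M2 by auto
        qed
        have "(y1 \<in> Nc h) \<noteq> (y2 \<in> Nc h)" using uw p yP wy out(9) by auto
        then show ?thesis using S1 \<open>h \<in> S\<close> by blast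
      qed
    next
      case False
      then have uy: "u = y1 \<or> u = y2" using cu by auto
      show ?thesis
      proof (cases "\<exists>t<length P. even t \<and> w = P ! t")
        case True
        then obtain q where q: "q < length P" "w = P ! q" by blast
        have S1: "{t. t \<le> M \<and> T t} = {q}"
        proof (intro set_eqI iffI)
          fix t assume "t \<in> {t. t \<le> M \<and> T t}"
          then have "t < length P" "P ! t = u \<or> P ! t = P ! q" using TT uw q M2 by auto
          then show "t \<in> {q}" using inj q yP uy by auto
        next
          fix t assume "t \<in> {q}"
          then show "t \<in> {t. t \<le> M \<and> T t}" using TT uw q M2 by auto
        qed
        have "(y1 \<in> Nc h) \<noteq> (y2 \<in> Nc h)" using uw q yP uy out(9) by auto
        then show ?thesis using S1 \<open>h \<in> S\<close> by blast
      next
        case False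
        then have wy: "w = y1 \<or> w = y2" using cw by auto
        have S0: "{t. t \<le> M \<and> T t} = {}"
        proof (intro set_eqI iffI)
          fix t assume "t \<in> {t. t \<le> M \<and> T t}"
          then have "t < length P" "P ! t = u \<or> P ! t = w" using TT uw M2 by auto
          then show "t \<in> {}" using yP uy wy by auto
        qed simp
        have "y1 \<in> Nc h \<and> y2 \<in> Nc h" using uw uy wy by auto
        then show ?thesis using S0 \<open>h \<in> S\<close> by blast
      qed
    qed
  qed
  note C = comb[where e=e and T=T and s=s and M=M and xa="o0 \<in> Nc (P ! 0)" and xb="ot \<in> Nc (P ! M)"
      and sh="h \<in> S" and ya="y1 \<in> Nc h" and yb="y2 \<in> Nc h", OF M2(1,2) L1 L2 L3 L4 L5 ev hub]
  have sE: "s = (\<lambda>t. P ! t \<in> S)" using s_def by auto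
  have MM: "M = length P - 1" by (simp add: M_def)
  have tl: "\<And>t. t < length P \<longleftrightarrow> t \<le> M" using M2 by auto
  let ?L = "has_perfect_matching ((set P \<union> {h}) - S) (hbw_edges P h) \<and> even (card (S \<inter> (set P \<union> {h})))"
  have bad: "odd (card (S \<inter> (set P \<union> {h})))"
    if "(h \<notin> S \<and> (\<forall>t\<le>M. s t)) \<or> (h \<in> S \<and> (\<forall>t\<le>M. \<not> s t)) \<or> (h \<in> S \<and> (\<exists>i j. badI s M i j))"
    using that
  proof (elim disjE conjE exE)
    assume "h \<notin> S" "\<forall>t\<le>M. s t"
    then show ?thesis using shape_B1[OF d oP hP] unfolding sE MM by blast
  next
    assume "h \<in> S" "\<forall>t\<le>M. \<not> s t"
    then show ?thesis using shape_B2[OF d oP hP] unfolding sE MM by blast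
  next
    fix i j assume "h \<in> S" "badI s M i j"
    then show ?thesis using shape_B3[OF d oP hP] unfolding sE MM by blast
  qed
  have g1: "?L" if "h \<in> S" "\<exists>i j. goodI s M i j"
    using that shape_G2[OF d oP hP] unfolding sE MM by blast
  have g2: "?L" if "h \<notin> S" "\<forall>t\<le>M. \<not> s t"
  proof (rule shape_G1[OF d oP hP that(1)])
    show "\<forall>t<length P. P ! t \<notin> S" using that(2) tl unfolding sE by auto
  qed
  show ?thesis using C bad g1 g2 unfolding MM by blast
qed


definition G2d :: "'a list \<Rightarrow> 'a \<Rightarrow> 'a list \<Rightarrow> 'a \<Rightarrow> 'a set \<Rightarrow> 'a set set \<Rightarrow> bool" where
  "G2d P0 h0 P1 h1 V E \<longleftrightarrow> is_half_biwheel_path P0 h0 \<and> is_half_biwheel_path P1 h1 \<and>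
     3 \<le> length P0 \<and> 3 \<le> length P1 \<and>
     (set P0 \<union> {h0}) \<inter> (set P1 \<union> {h1}) = {} \<and>
     V = set P0 \<union> {h0} \<union> set P1 \<union> {h1} \<and>
     E = hbw_edges P0 h0 \<union> hbw_edges P1 h1 \<union>
         {{h1, h0}, {last P1, last P0}, {hd P0, h1}, {h0, hd P1}}"

lemma in_G2_G2d: "in_G2 V E \<Longrightarrow> \<exists>P0 h0 P1 h1. G2d P0 h0 P1 h1 V E"
  unfolding in_G2_def G2d_def by blast

lemma G2d_swap:
  assumes "G2d P0 h0 P1 h1 V E" shows "G2d P1 h1 P0 h0 V E"
proof -
  have c: "{{h1, h0}, {last P1, last P0}, {hd P0, h1}, {h0, hd P1}} = {{h0, h1}, {last P0, last P1}, {hd P1, h0}, {h1, hd P0}}"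
    by (simp add: insert_commute)
  show ?thesis using assms unfolding G2d_def c by (simp add: Un_ac Int_commute insert_commute)
qed

lemma hbw_cases:
  assumes "e \<in> hbw_edges P h"
  shows "(\<exists>i. e = {P ! i, P ! Suc i} \<and> Suc i < length P) \<or> (\<exists>i. e = {h, P ! i} \<and> i < length P \<and> even i)"
  using assms unfolding hbw_edges_def by (simp only: Un_iff mem_Collect_eq Suc_eq_plus1)

lemma hbw_sub: "e \<in> hbw_edges P h \<Longrightarrow> e \<subseteq> set P \<union> {h}"
  unfolding hbw_edges_def by auto

lemma G2d_facts:
  assumes "G2d P0 h0 P1 h1 V E"
  shows "distinct P0" "odd (length P0)" "h0 \<notin> set P0" "3 \<le> length P0"
    "distinct P1" "odd (length P1)" "h1 \<notin> set P1" "3 \<le> length P1"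
    "h0 \<noteq> h1" "h1 \<notin> set P0" "h0 \<notin> set P1" "set P0 \<inter> set P1 = {}"
    "V = set P0 \<union> {h0} \<union> set P1 \<union> {h1}"
    "E = hbw_edges P0 h0 \<union> hbw_edges P1 h1 \<union> {{h1, h0}, {last P1, last P0}, {hd P0, h1}, {h0, hd P1}}"
    "hd P0 = P0 ! 0" "last P0 = P0 ! (length P0 - 1)" "hd P1 = P1 ! 0" "last P1 = P1 ! (length P1 - 1)"
proof -
  have a: "distinct P0" "odd (length P0)" "h0 \<notin> set P0" "3 \<le> length P0"
    "distinct P1" "odd (length P1)" "h1 \<notin> set P1" "3 \<le> length P1"
    "(set P0 \<union> {h0}) \<inter> (set P1 \<union> {h1}) = {}"
    using assms unfolding G2d_def is_half_biwheel_path_def by blast+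
  have b: "V = set P0 \<union> {h0} \<union> set P1 \<union> {h1}"
    "E = hbw_edges P0 h0 \<union> hbw_edges P1 h1 \<union> {{h1, h0}, {last P1, last P0}, {hd P0, h1}, {h0, hd P1}}"
    using assms unfolding G2d_def by blast+
  have ne: "P0 \<noteq> []" "P1 \<noteq> []" using a(4,8) by auto
  show "distinct P0" "odd (length P0)" "h0 \<notin> set P0" "3 \<le> length P0"
    "distinct P1" "odd (length P1)" "h1 \<notin> set P1" "3 \<le> length P1" using a by blast+
  show "h0 \<noteq> h1" "h1 \<notin> set P0" "h0 \<notin> set P1" "set P0 \<inter> set P1 = {}" using a(9) by blast+
  show "V = set P0 \<union> {h0} \<union> set P1 \<union> {h1}"
    "E = hbw_edges P0 h0 \<union> hbw_edges P1 h1 \<union> {{h1, h0}, {last P1, last P0}, {hd P0, h1}, {h0, hd P1}}"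
    using b by blast+
  show "hd P0 = P0 ! 0" "last P0 = P0 ! (length P0 - 1)" "hd P1 = P1 ! 0" "last P1 = P1 ! (length P1 - 1)"
    using ne by (simp_all add: hd_conv_nth last_conv_nth)
qed

lemma nbrP:
  assumes G: "G2d P0 h0 P1 h1 V E" and t: "t < length P0" and u: "{P0 ! t, u} \<in> E"
  shows "(0 < t \<and> u = P0 ! (t - 1)) \<or> (Suc t < length P0 \<and> u = P0 ! Suc t) \<or> (even t \<and> u = h0)
       \<or> (t = 0 \<and> u = h1) \<or> (t = length P0 - 1 \<and> u = P1 ! (length P1 - 1))"
proof -
  note F = G2d_facts[OF G]
  have inj: "\<And>a b. a < length P0 \<Longrightarrow> b < length P0 \<Longrightarrow> P0 ! a = P0 ! b \<longleftrightarrow> a = b"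
    using F(1) by (simp add: nth_eq_iff_index_eq)
  have pt: "P0 ! t \<in> set P0" using t by simp
  have n1: "P0 ! t \<notin> set P1 \<union> {h1}" using pt F(10,12) by auto
  have n2: "P0 ! t \<noteq> h0" using pt F(3) by auto
  have l1: "P1 ! (length P1 - 1) \<in> set P1" "P1 ! 0 \<in> set P1" using F(8) by (auto intro!: nth_mem)
  consider (a) "{P0 ! t, u} \<in> hbw_edges P0 h0" | (b) "{P0 ! t, u} \<in> hbw_edges P1 h1"
    | (c) "{P0 ! t, u} \<in> {{h1, h0}, {last P1, last P0}, {hd P0, h1}, {h0, hd P1}}"
    using u F(14) by blast
  then show ?thesis
  proof cases
    case a
    then consider (p) i where "{P0 ! t, u} = {P0 ! i, P0 ! Suc i}" "Suc i < length P0"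
      | (q) i where "{P0 ! t, u} = {h0, P0 ! i}" "i < length P0" "even i"
      using hbw_cases by metis
    then show ?thesis
    proof cases
      case p
      then have "(P0 ! t = P0 ! i \<and> u = P0 ! Suc i) \<or> (P0 ! t = P0 ! Suc i \<and> u = P0 ! i)"
        by (simp add: doubleton_eq_iff)
      then have "(t = i \<and> u = P0 ! Suc i) \<or> (t = Suc i \<and> u = P0 ! i)"
        using inj[of t i] inj[of t "Suc i"] t p(2) by auto
      then show ?thesis using p(2) by auto
    next
      case q
      then have "P0 ! t = P0 ! i \<and> u = h0" using n2 by (auto simp: doubleton_eq_iff)
      then show ?thesis using inj[of t i] t q by auto
    qed
  next
    case b
    then show ?thesis using hbw_sub[OF b] n1 by auto
  next
    case c
    then consider "{P0 ! t, u} = {h1, h0}" | "{P0 ! t, u} = {P1 ! (length P1 - 1), P0 ! (length P0 - 1)}"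
      | "{P0 ! t, u} = {P0 ! 0, h1}" | "{P0 ! t, u} = {h0, P1 ! 0}"
      using F(15-18) by auto
    then show ?thesis
    proof cases
      case 1 then show ?thesis using n1 n2 by (auto simp: doubleton_eq_iff)
    next
      case 2
      then have "P0 ! t = P0 ! (length P0 - 1) \<and> u = P1 ! (length P1 - 1)"
        using n1 l1 by (auto simp: doubleton_eq_iff)
      then show ?thesis using inj[of t "length P0 - 1"] t by auto
    next
      case 3
      then have "P0 ! t = P0 ! 0 \<and> u = h1" using n1 by (auto simp: doubleton_eq_iff)
      moreover have "0 < length P0" using F(4) by linarith
      ultimately show ?thesis using inj[of t 0] t by auto
    next
      case 4 then show ?thesis using n1 n2 l1 by (auto simp: doubleton_eq_iff)
    qed
  qed
qed

lemma nbrh: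
  assumes G: "G2d P0 h0 P1 h1 V E" and u: "{h0, u} \<in> E"
  shows "(\<exists>t<length P0. even t \<and> u = P0 ! t) \<or> u = h1 \<or> u = P1 ! 0"
proof -
  note F = G2d_facts[OF G]
  have n1: "h0 \<notin> set P1 \<union> {h1}" using F(9,11) by auto
  have l1: "P1 ! (length P1 - 1) \<in> set P1" "P0 ! (length P0 - 1) \<in> set P0" "P0 ! 0 \<in> set P0"
    using F(4,8) by (auto intro!: nth_mem)
  consider (a) "{h0, u} \<in> hbw_edges P0 h0" | (b) "{h0, u} \<in> hbw_edges P1 h1"
    | (c) "{h0, u} \<in> {{h1, h0}, {last P1, last P0}, {hd P0, h1}, {h0, hd P1}}"
    using u F(14) by blast
  then show ?thesis
  proof cases
    case a
    then consider (p) i where "{h0, u} = {P0 ! i, P0 ! Suc i}" "Suc i < length P0"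
      | (q) i where "{h0, u} = {h0, P0 ! i}" "i < length P0" "even i"
      using hbw_cases by metis
    then show ?thesis
    proof cases
      case p
      then have "h0 = P0 ! i \<or> h0 = P0 ! Suc i" by (auto simp: doubleton_eq_iff)
      then have "h0 \<in> set P0" using p(2) by (metis Suc_lessD nth_mem)
      then show ?thesis using F(3) by simp
    next
      case q
      then have "u = P0 ! i" using F(3) by (auto simp: doubleton_eq_iff)
      then show ?thesis using q by auto
    qed
  next
    case b
    then show ?thesis using hbw_sub[OF b] n1 by auto
  next
    case c
    then consider "{h0, u} = {h1, h0}" | "{h0, u} = {P1 ! (length P1 - 1), P0 ! (length P0 - 1)}"
      | "{h0, u} = {P0 ! 0, h1}" | "{h0, u} = {h0, P1 ! 0}"
      using F(15-18) by auto
    then show ?thesis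
    proof cases
      case 1 then show ?thesis by (auto simp: doubleton_eq_iff)
    next
      case 2 then show ?thesis using n1 l1 F(3) by (auto simp: doubleton_eq_iff)
    next
      case 3 then show ?thesis using n1 l1 F(3) by (auto simp: doubleton_eq_iff)
    next
      case 4 then show ?thesis by (auto simp: doubleton_eq_iff)
    qed
  qed
qed

lemma modA: "(k'::nat) < L \<Longrightarrow> k < L \<Longrightarrow> (k' + 1) mod L = k \<Longrightarrow> k' = (k + L - 1) mod L"
proof (cases "k' + 1 < L")
  case True
  assume a: "k' < L" "k < L" "(k' + 1) mod L = k"
  then have "k = k' + 1" using True by simp
  then have "k + L - 1 = k' + L" by simp
  then show ?thesis using a(1) by simp
next
  case False
  assume a: "k' < L" "k < L" "(k' + 1) mod L = k"
  then have "k' + 1 = L" using False by simp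
  then have "k = 0" using a(3) by simp
  then show ?thesis using \<open>k' + 1 = L\<close> a(1) by simp
qed

lemma modB: "(k::nat) < L \<Longrightarrow> ((k + L - 1) mod L + 1) mod L = k"
proof (cases "k = 0")
  case True
  assume kL: "k < L"
  have e1: "k + L - 1 = L - 1" using True by simp
  have e2: "(L - 1) mod L = L - 1" using kL by (intro mod_less) linarith
  have e3: "L - 1 + 1 = L" using kL by linarith
  show ?thesis unfolding e1 e2 e3 using True by simp
next
  case False
  assume kL: "k < L"
  have e1: "k + L - 1 = (k - 1) + L" using False by linarith
  have e2: "((k - 1) + L) mod L = k - 1" using kL by (simp add: mod_less)
  have e3: "k - 1 + 1 = k" using False by linarith
  show ?thesis unfolding e1 e2 e3 using kL by (intro mod_less)
qed

lemma modC: "(k::nat) < L \<Longrightarrow> 3 \<le> L \<Longrightarrow> (k + 1) mod L \<noteq> (k + L - 1) mod L"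
proof (cases "k = 0")
  case True
  assume kL: "k < L" "3 \<le> L"
  have e1: "k + L - 1 = L - 1" using True by simp
  have e2: "(L - 1) mod L = L - 1" using kL by (intro mod_less) linarith
  have e3: "(k + 1) mod L = 1" using True kL by (simp add: mod_less)
  show ?thesis unfolding e1 e2 e3 using kL by linarith
next
  case False
  assume kL: "k < L" "3 \<le> L"
  have e1: "k + L - 1 = (k - 1) + L" using False by linarith
  have e2: "((k - 1) + L) mod L = k - 1" using kL by (simp add: mod_less)
  show ?thesis
  proof (cases "k + 1 < L")
    case True
    then have "(k + 1) mod L = k + 1" by (intro mod_less)
    then show ?thesis unfolding e1 e2 by linarith
  next
    case False
    then have "k + 1 = L" using kL by linarith
    then have "(k + 1) mod L = 0" by simp
    then show ?thesis unfolding e1 e2 using kL \<open>k + 1 = L\<close> by linarith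
  qed
qed

definition cnb :: "'a list \<Rightarrow> 'a \<Rightarrow> 'a set" where
  "cnb c v = {u. \<exists>k<length c. (c ! k = v \<and> c ! ((k + 1) mod length c) = u) \<or> (c ! k = u \<and> c ! ((k + 1) mod length c) = v)}"

lemma cnb_sym: "u \<in> cnb c v \<longleftrightarrow> v \<in> cnb c u"
  unfolding cnb_def by blast

lemma cnb_edge: assumes "is_cycle V E c" "u \<in> cnb c v" shows "{v, u} \<in> E"
proof -
  have ed: "\<forall>i < length c. {c ! i, c ! ((i + 1) mod length c)} \<in> E" using assms(1) unfolding is_cycle_def by blast
  obtain k where k: "k < length c" "(c ! k = v \<and> c ! ((k + 1) mod length c) = u) \<or> (c ! k = u \<and> c ! ((k + 1) mod length c) = v)"
    using assms(2) unfolding cnb_def by blast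
  then show ?thesis using ed[rule_format, OF k(1)] by (auto simp: insert_commute)
qed

lemma cnb_in: assumes "u \<in> cnb c v" shows "u \<in> set c \<and> v \<in> set c"
proof -
  obtain k where k: "k < length c" "(c ! k = v \<and> c ! ((k + 1) mod length c) = u) \<or> (c ! k = u \<and> c ! ((k + 1) mod length c) = v)"
    using assms unfolding cnb_def by blast
  have "0 < length c" using k(1) by linarith
  then have "(k + 1) mod length c < length c" by simp
  then have "c ! ((k + 1) mod length c) \<in> set c" "c ! k \<in> set c" using k(1) by simp_all
  then show ?thesis using k(2) by auto
qed

lemma cnb_notin: assumes "v \<notin> set c" shows "cnb c v = {}"
proof -
  have "u \<notin> cnb c v" for u using cnb_in[of u c v] assms by blast
  then show ?thesis by blast
qed

lemma cnb_card:
  assumes cy: "is_cycle V E c" and v: "v \<in> set c"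
  shows "card (cnb c v) = 2"
proof -
  define L where "L = length c"
  have d: "distinct c" and L3: "3 \<le> L" using cy unfolding is_cycle_def L_def by auto
  obtain k where k: "k < L" "c ! k = v" using v unfolding L_def by (metis in_set_conv_nth)
  have inj: "\<And>a b. a < L \<Longrightarrow> b < L \<Longrightarrow> c ! a = c ! b \<longleftrightarrow> a = b"
    using d unfolding L_def by (simp add: nth_eq_iff_index_eq)
  define a where "a = (k + 1) mod L"
  define b where "b = (k + L - 1) mod L"
  have aL: "a < L" "b < L" using L3 unfolding a_def b_def by auto
  have eq: "cnb c v = {c ! a, c ! b}"
  proof (intro set_eqI iffI)
    fix u assume "u \<in> cnb c v"
    then obtain k' where k': "k' < L" "(c ! k' = v \<and> c ! ((k' + 1) mod L) = u) \<or> (c ! k' = u \<and> c ! ((k' + 1) mod L) = v)"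
      unfolding cnb_def L_def by blast
    have mL: "(k' + 1) mod L < L" using L3 by auto
    show "u \<in> {c ! a, c ! b}"
    proof (cases "c ! k' = v \<and> c ! ((k' + 1) mod L) = u")
      case True
      then have "k' = k" using inj[of k' k] k k' by auto
      then show ?thesis using True unfolding a_def by simp
    next
      case False
      then have "c ! k' = u" "c ! ((k' + 1) mod L) = c ! k" using k' k by auto
      then have "(k' + 1) mod L = k" using inj[OF mL k(1)] by simp
      then have "k' = b" unfolding b_def using modA k'(1) k(1) by blast
      then show ?thesis using \<open>c ! k' = u\<close> by simp
    qed
  next
    fix u assume "u \<in> {c ! a, c ! b}"
    then consider "u = c ! a" | "u = c ! b" by blast
    then show "u \<in> cnb c v"
    proof cases
      case 1 then show ?thesis unfolding cnb_def a_def L_def using k L_def by auto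
    next
      case 2
      have "(b + 1) mod L = k" unfolding b_def using modB k(1) by blast
      then show ?thesis unfolding cnb_def using 2 aL k L_def by auto
    qed
  qed
  have "a \<noteq> b" unfolding a_def b_def using modC k(1) L3 by blast
  then have "c ! a \<noteq> c ! b" using inj aL by blast
  then show ?thesis unfolding eq by simp
qed


lemma pm_del:
  assumes "perfect_matching V' E M" "V' \<inter> S = {}"
  shows "perfect_matching V' (del_vertices_edges E S) M"
  using assms unfolding perfect_matching_def del_vertices_edges_def by blast

lemma even_cycle_ok:
  assumes G: "G2d P0 h0 P1 h1 V E" and c: "is_even_cycle V E c"
  shows "has_perfect_matching (V - set c) (del_vertices_edges E (set c))"
proof -
  note F = G2d_facts[OF G]
  note G' = G2d_swap[OF G]
  have cy: "is_cycle V E c" and evc: "even (length c)" using c unfolding is_even_cycle_def by auto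
  have dc: "distinct c" and cV: "set c \<subseteq> V" using cy unfolding is_cycle_def by auto
  define S where "S = set c"
  have NcS: "\<And>v. v \<in> S \<Longrightarrow> card (cnb c v) = 2" unfolding S_def by (rule cnb_card[OF cy])
  have NcN: "\<And>v. v \<notin> S \<Longrightarrow> cnb c v = {}" unfolding S_def by (rule cnb_notin)
  have sym: "\<And>u v. u \<in> cnb c v \<longleftrightarrow> v \<in> cnb c u" by (rule cnb_sym)
  have l0: "P0 ! 0 \<in> set P0" "P0 ! (length P0 - 1) \<in> set P0" using F(4) by (auto intro!: nth_mem)
  have l1: "P1 ! 0 \<in> set P1" "P1 ! (length P1 - 1) \<in> set P1" using F(8) by (auto intro!: nth_mem)
  have o0s: "h1 \<notin> set P0" "h1 \<noteq> h0" "P1 ! 0 \<notin> set P0" "P1 ! 0 \<noteq> h0"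
     "h1 \<notin> set P0" "h1 \<noteq> h0" "P1 ! (length P1 - 1) \<notin> set P0" "P1 ! (length P1 - 1) \<noteq> h0"
     "h1 \<noteq> P1 ! 0"
    using F(7,9,10,11,12) l1 by auto
  have o1s: "h0 \<notin> set P1" "h0 \<noteq> h1" "P0 ! 0 \<notin> set P1" "P0 ! 0 \<noteq> h1"
     "h0 \<notin> set P1" "h0 \<noteq> h1" "P0 ! (length P0 - 1) \<notin> set P1" "P0 ! (length P0 - 1) \<noteq> h1"
     "h0 \<noteq> P0 ! 0"
    using F(3,9,10,11,12) l0 by auto
  have nbP0: "\<And>t u. t < length P0 \<Longrightarrow> u \<in> cnb c (P0 ! t) \<Longrightarrow>
       (0 < t \<and> u = P0 ! (t - 1)) \<or> (Suc t < length P0 \<and> u = P0 ! Suc t) \<or> (even t \<and> u = h0)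
       \<or> (t = 0 \<and> u = h1) \<or> (t = length P0 - 1 \<and> u = P1 ! (length P1 - 1))"
    by (rule nbrP[OF G], assumption, rule cnb_edge[OF cy])
  have nbh0: "\<And>u. u \<in> cnb c h0 \<Longrightarrow> (\<exists>t<length P0. even t \<and> u = P0 ! t) \<or> u = h1 \<or> u = P1 ! 0"
    by (rule nbrh[OF G], rule cnb_edge[OF cy])
  have nbP1: "\<And>t u. t < length P1 \<Longrightarrow> u \<in> cnb c (P1 ! t) \<Longrightarrow>
       (0 < t \<and> u = P1 ! (t - 1)) \<or> (Suc t < length P1 \<and> u = P1 ! Suc t) \<or> (even t \<and> u = h1)
       \<or> (t = 0 \<and> u = h0) \<or> (t = length P1 - 1 \<and> u = P0 ! (length P0 - 1))"
    by (rule nbrP[OF G'], assumption, rule cnb_edge[OF cy])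
  have nbh1: "\<And>u. u \<in> cnb c h1 \<Longrightarrow> (\<exists>t<length P1. even t \<and> u = P1 ! t) \<or> u = h0 \<or> u = P0 ! 0"
    by (rule nbrh[OF G'], rule cnb_edge[OF cy])
  note R0 = side[OF F(1) F(2) F(4) F(3) o0s NcS NcN sym nbP0 nbh0]
  note R1 = side[OF F(5) F(6) F(8) F(7) o1s NcS NcN sym nbP1 nbh1]
  define A0 where "A0 = set P0 \<union> {h0}"
  define A1 where "A1 = set P1 \<union> {h1}"
  have dis: "A0 \<inter> A1 = {}" unfolding A0_def A1_def using F(3,7,9,10,11,12) by auto
  have VA: "V = A0 \<union> A1" unfolding A0_def A1_def F(13) by auto
  have SA: "S = (S \<inter> A0) \<union> (S \<inter> A1)" using cV VA unfolding S_def by auto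
  have fin: "finite (S \<inter> A0)" "finite (S \<inter> A1)" unfolding A0_def A1_def by auto
  have cS: "card S = card (S \<inter> A0) + card (S \<inter> A1)"
    by (subst SA, rule card_Un_disjoint[OF fin]) (use dis in auto)
  have evS: "even (card S)" unfolding S_def using distinct_card[OF dc] evc by simp
  have R0': "(has_perfect_matching (A0 - S) (hbw_edges P0 h0) \<and> even (card (S \<inter> A0)))
    \<or> (odd (card (S \<inter> A0)) \<and> ((h1 \<notin> cnb c h0 \<and> P1 ! 0 \<notin> cnb c h0 \<and> h1 \<in> cnb c (P0 ! 0) \<and> P1 ! (length P1 - 1) \<in> cnb c (P0 ! (length P0 - 1)))
         \<or> (h1 \<in> cnb c h0 \<and> P1 ! 0 \<in> cnb c h0 \<and> h1 \<notin> cnb c (P0 ! 0) \<and> P1 ! (length P1 - 1) \<notin> cnb c (P0 ! (length P0 - 1)))))"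
    using R0 unfolding A0_def .
  have R1': "(has_perfect_matching (A1 - S) (hbw_edges P1 h1) \<and> even (card (S \<inter> A1)))
    \<or> (odd (card (S \<inter> A1)) \<and> ((h0 \<notin> cnb c h1 \<and> P0 ! 0 \<notin> cnb c h1 \<and> h0 \<in> cnb c (P1 ! 0) \<and> P0 ! (length P0 - 1) \<in> cnb c (P1 ! (length P1 - 1)))
         \<or> (h0 \<in> cnb c h1 \<and> P0 ! 0 \<in> cnb c h1 \<and> h0 \<notin> cnb c (P1 ! 0) \<and> P0 ! (length P0 - 1) \<notin> cnb c (P1 ! (length P1 - 1)))))"
    using R1 unfolding A1_def .
  have s1: "h1 \<in> cnb c h0 \<longleftrightarrow> h0 \<in> cnb c h1" "h1 \<in> cnb c (P0 ! 0) \<longleftrightarrow> P0 ! 0 \<in> cnb c h1"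
    using sym by blast+
  have both: "has_perfect_matching (A0 - S) (hbw_edges P0 h0) \<and> has_perfect_matching (A1 - S) (hbw_edges P1 h1)"
  proof -
    have "\<not> (odd (card (S \<inter> A0)) \<and> odd (card (S \<inter> A1)))"
    proof
      assume o: "odd (card (S \<inter> A0)) \<and> odd (card (S \<inter> A1))"
      then show False using R0' R1' s1 by blast
    qed
    moreover have "even (card (S \<inter> A0)) \<longleftrightarrow> even (card (S \<inter> A1))" using cS evS by simp
    ultimately have "even (card (S \<inter> A0)) \<and> even (card (S \<inter> A1))" by blast
    then show ?thesis using R0' R1' by blast
  qed
  then obtain M0 M1 where M0: "perfect_matching (A0 - S) (hbw_edges P0 h0) M0"
    and M1: "perfect_matching (A1 - S) (hbw_edges P1 h1) M1"
    unfolding has_perfect_matching_def by blast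
  have M0': "perfect_matching (A0 - S) E M0" by (rule pm_mono[OF M0]) (use F(14) in auto)
  have M1': "perfect_matching (A1 - S) E M1" by (rule pm_mono[OF M1]) (use F(14) in auto)
  have U: "perfect_matching ((A0 - S) \<union> (A1 - S)) E (M0 \<union> M1)"
    by (rule pm_union[OF M0' M1']) (use dis in auto)
  have VS: "V - S = (A0 - S) \<union> (A1 - S)" using VA by auto
  have "perfect_matching (V - S) (del_vertices_edges E S) (M0 \<union> M1)"
    unfolding VS by (rule pm_del[OF U]) auto
  then show ?thesis unfolding S_def has_perfect_matching_def by blast
qed


lemma side_pm:
  assumes d: "distinct P" and oP: "odd (length P)" and h: "h \<notin> set P" and i: "i < length P" "even i"
  shows "perfect_matching (set P \<union> {h}) (hbw_edges P h) ({{h, P ! i}} \<union> (pairs P 0 i \<union> pairs P (Suc i) (length P)))"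
proof -
  have m1: "perfect_matching {h, P ! i} (hbw_edges P h) {{h, P ! i}}"
    by (rule pm_edge) (use h i hub_edge[of i P h] in auto)
  have m2: "perfect_matching ((!) P ` {0..<i}) (hbw_edges P h) (pairs P 0 i)"
    by (rule pm_pairs) (use d i in auto)
  have m3: "perfect_matching ((!) P ` {Suc i..<length P}) (hbw_edges P h) (pairs P (Suc i) (length P))"
    by (rule pm_pairs) (use d i oP in auto)
  have dj: "(!) P ` {0..<i} \<inter> (!) P ` {Suc i..<length P} = {}"
    by (rule inj_nth_img_disj) (use d i in auto)
  note m23 = pm_union[OF m2 m3 dj]
  have dj2: "{h, P ! i} \<inter> ((!) P ` {0..<i} \<union> (!) P ` {Suc i..<length P}) = {}"
    using h d i by (auto simp: nth_eq_iff_index_eq)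
  note m = pm_union[OF m1 m23 dj2]
  have V: "{h, P ! i} \<union> ((!) P ` {0..<i} \<union> (!) P ` {Suc i..<length P}) = set P \<union> {h}"
  proof -
    have "{..<length P} = {0..<i} \<union> {i} \<union> {Suc i..<length P}" using i by auto
    then have "set P = (!) P ` {0..<i} \<union> {P ! i} \<union> (!) P ` {Suc i..<length P}"
      unfolding set_nth_img by (simp add: lessThan_def image_Un)
    then show ?thesis by auto
  qed
  show ?thesis using m unfolding V .
qed

lemma pairs_mem: "i \<le> t \<Longrightarrow> Suc t < j \<Longrightarrow> even (t - i) \<Longrightarrow> {P ! t, P ! Suc t} \<in> pairs P i j"
  unfolding pairs_def by blast

lemma side_edge_pm:
  assumes d: "distinct P" and oP: "odd (length P)" and h: "h \<notin> set P" and e: "e \<in> hbw_edges P h"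
  shows "\<exists>M. perfect_matching (set P \<union> {h}) (hbw_edges P h) M \<and> e \<in> M"
proof -
  consider (p) t where "e = {P ! t, P ! Suc t}" "Suc t < length P"
    | (q) i where "e = {h, P ! i}" "i < length P" "even i"
    using hbw_cases[OF e] by metis
  then show ?thesis
  proof cases
    case p
    show ?thesis
    proof (cases "even t")
      case True
      have o1: "odd (Suc t)" using True by simp
      have o2: "even (length P - 1)" using oP p(2) by simp
      have "Suc t \<noteq> length P - 1" using o1 o2 by metis
      then have "Suc t < length P - 1" using p(2) by linarith
      then have "e \<in> pairs P 0 (length P - 1)" unfolding p(1) by (rule pairs_mem[OF le0]) (use True in simp)
      moreover have "length P - 1 < length P" using p(2) by linarith
      ultimately show ?thesis using side_pm[OF d oP h _ o2] by blast
    next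
      case False
      then have t1: "Suc 0 \<le> t" "even (t - Suc 0)" by (cases t; simp)+
      have "e \<in> pairs P (Suc 0) (length P)" unfolding p(1) by (rule pairs_mem[OF t1(1) p(2) t1(2)])
      moreover have "0 < length P" using p(2) by linarith
      moreover have "even (0::nat)" by simp
      ultimately show ?thesis using side_pm[OF d oP h, of 0] by auto
    qed
  next
    case q
    then show ?thesis using side_pm[OF d oP h q(2,3)] by blast
  qed
qed

lemma G_pm_sides:
  assumes G: "G2d P0 h0 P1 h1 V E"
    and M0: "perfect_matching (set P0 \<union> {h0}) (hbw_edges P0 h0) M0"
    and M1: "perfect_matching (set P1 \<union> {h1}) (hbw_edges P1 h1) M1"
  shows "perfect_matching V E (M0 \<union> M1)"
proof -
  note F = G2d_facts[OF G]
  have a: "perfect_matching (set P0 \<union> {h0}) E M0" by (rule pm_mono[OF M0]) (use F(14) in auto)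
  have b: "perfect_matching (set P1 \<union> {h1}) E M1" by (rule pm_mono[OF M1]) (use F(14) in auto)
  have dj: "(set P0 \<union> {h0}) \<inter> (set P1 \<union> {h1}) = {}" using F(9-12) by auto
  have V: "V = (set P0 \<union> {h0}) \<union> (set P1 \<union> {h1})" using F(13) by auto
  show ?thesis unfolding V by (rule pm_union[OF a b dj])
qed

lemma G_side_edge:
  assumes G: "G2d P0 h0 P1 h1 V E" and e: "e \<in> hbw_edges P0 h0"
  shows "\<exists>M. perfect_matching V E M \<and> e \<in> M"
proof -
  note F = G2d_facts[OF G]
  obtain M0 where M0: "perfect_matching (set P0 \<union> {h0}) (hbw_edges P0 h0) M0" "e \<in> M0"
    using side_edge_pm[OF F(1,2,3) e] by blast
  have l: "0 < length P1" using F(8) by linarith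
  have "even (0::nat)" by simp
  note M1 = side_pm[OF F(5,6,7) l this]
  show ?thesis using G_pm_sides[OF G M0(1) M1] M0(2) by blast
qed

lemma G_pm_S:
  assumes G: "G2d P0 h0 P1 h1 V E" and MS: "perfect_matching S E MS" and SV: "S \<subseteq> V"
    and H0: "has_perfect_matching ((set P0 \<union> {h0}) - S) (hbw_edges P0 h0)"
    and H1: "has_perfect_matching ((set P1 \<union> {h1}) - S) (hbw_edges P1 h1)"
  shows "\<exists>M. perfect_matching V E M \<and> MS \<subseteq> M"
proof -
  note F = G2d_facts[OF G]
  obtain M0 M1 where M0: "perfect_matching ((set P0 \<union> {h0}) - S) (hbw_edges P0 h0) M0"
    and M1: "perfect_matching ((set P1 \<union> {h1}) - S) (hbw_edges P1 h1) M1"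
    using H0 H1 unfolding has_perfect_matching_def by blast
  have a: "perfect_matching ((set P0 \<union> {h0}) - S) E M0" by (rule pm_mono[OF M0]) (use F(14) in auto)
  have b: "perfect_matching ((set P1 \<union> {h1}) - S) E M1" by (rule pm_mono[OF M1]) (use F(14) in auto)
  have dj: "((set P0 \<union> {h0}) - S) \<inter> ((set P1 \<union> {h1}) - S) = {}" using F(9-12) by auto
  note ab = pm_union[OF a b dj]
  have dj2: "S \<inter> (((set P0 \<union> {h0}) - S) \<union> ((set P1 \<union> {h1}) - S)) = {}" by auto
  note m = pm_union[OF MS ab dj2]
  have V: "S \<union> (((set P0 \<union> {h0}) - S) \<union> ((set P1 \<union> {h1}) - S)) = V" using F(13) SV by auto
  show ?thesis using m unfolding V by blast
qed


lemma goodI_single: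
  assumes d: "distinct P" and k: "k < length P" "even k" and s: "\<forall>t<length P. P ! t \<in> S \<longleftrightarrow> t = k"
  shows "goodI (\<lambda>t. P ! t \<in> S) (length P - 1) k k"
  unfolding goodI_def
proof (intro conjI allI impI)
  fix t assume "t \<le> length P - 1"
  then have "t < length P" using k by linarith
  then show "(P ! t \<in> S) = (k \<le> t \<and> t \<le> k)" using s by auto
qed (use k in auto)

lemma G_cross_top:
  assumes G: "G2d P0 h0 P1 h1 V E"
  shows "\<exists>M. perfect_matching V E M \<and> {h1, h0} \<in> M \<and> {last P1, last P0} \<in> M"
proof -
  note F = G2d_facts[OF G]
  define a where "a = length P0 - 1"
  define b where "b = length P1 - 1"
  have ab: "a < length P0" "b < length P1" "even a" "even b" using F(2,4,6,8) unfolding a_def b_def by auto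
  have la: "P0 ! a \<in> set P0" "P1 ! b \<in> set P1" using ab by auto
  define S where "S = {h1, h0} \<union> {P1 ! b, P0 ! a}"
  have e1: "{h1, h0} \<in> E" "{P1 ! b, P0 ! a} \<in> E" using F(14,16,18) unfolding a_def b_def by auto
  have m1: "perfect_matching {h1, h0} E {{h1, h0}}" by (rule pm_edge) (use F(9) e1 in auto)
  have m2: "perfect_matching {P1 ! b, P0 ! a} E {{P1 ! b, P0 ! a}}"
    by (rule pm_edge) (use F(12) la e1 in auto)
  have dj: "{h1, h0} \<inter> {P1 ! b, P0 ! a} = {}" using F(3,7,10,11) la by auto
  note MS = pm_union[OF m1 m2 dj]
  have SV: "S \<subseteq> V" unfolding S_def using F(13) la by auto
  have inj0: "\<And>t. t < length P0 \<Longrightarrow> P0 ! t \<in> S \<longleftrightarrow> t = a"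
  proof -
    fix t assume t: "t < length P0"
    then have "P0 ! t \<in> set P0" by simp
    then have "P0 ! t \<noteq> h1" "P0 ! t \<noteq> h0" "P0 ! t \<noteq> P1 ! b" using F(3,10,12) la by auto
    then show "P0 ! t \<in> S \<longleftrightarrow> t = a" unfolding S_def using t ab F(1) by (auto simp: nth_eq_iff_index_eq)
  qed
  have inj1: "\<And>t. t < length P1 \<Longrightarrow> P1 ! t \<in> S \<longleftrightarrow> t = b"
  proof -
    fix t assume t: "t < length P1"
    then have "P1 ! t \<in> set P1" by simp
    then have "P1 ! t \<noteq> h1" "P1 ! t \<noteq> h0" "P1 ! t \<noteq> P0 ! a" using F(7,11,12) la by auto
    then show "P1 ! t \<in> S \<longleftrightarrow> t = b" unfolding S_def using t ab F(5) by (auto simp: nth_eq_iff_index_eq)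
  qed
  have g0: "goodI (\<lambda>t. P0 ! t \<in> S) (length P0 - 1) a a" by (rule goodI_single) (use F(1) ab inj0 in auto)
  have g1: "goodI (\<lambda>t. P1 ! t \<in> S) (length P1 - 1) b b" by (rule goodI_single) (use F(5) ab inj1 in auto)
  have H0: "has_perfect_matching ((set P0 \<union> {h0}) - S) (hbw_edges P0 h0)"
    using shape_G2[OF F(1,2,3) _ g0] unfolding S_def by blast
  have H1: "has_perfect_matching ((set P1 \<union> {h1}) - S) (hbw_edges P1 h1)"
    using shape_G2[OF F(5,6,7) _ g1] unfolding S_def by blast
  have MS': "perfect_matching S E ({{h1, h0}} \<union> {{P1 ! b, P0 ! a}})" using MS unfolding S_def .
  obtain M where "perfect_matching V E M" "{{h1, h0}} \<union> {{P1 ! b, P0 ! a}} \<subseteq> M"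
    using G_pm_S[OF G MS' SV H0 H1] by blast
  then show ?thesis using F(16,18) unfolding a_def b_def by auto
qed

lemma G_cross_bot:
  assumes G: "G2d P0 h0 P1 h1 V E"
  shows "\<exists>M. perfect_matching V E M \<and> {hd P0, h1} \<in> M \<and> {h0, hd P1} \<in> M"
proof -
  note F = G2d_facts[OF G]
  have ab: "0 < length P0" "0 < length P1" using F(4,8) by linarith+
  have la: "P0 ! 0 \<in> set P0" "P1 ! 0 \<in> set P1" using ab by auto
  define S where "S = {P0 ! 0, h1} \<union> {h0, P1 ! 0}"
  have e1: "{P0 ! 0, h1} \<in> E" "{h0, P1 ! 0} \<in> E" using F(14,15,17) by auto
  have m1: "perfect_matching {P0 ! 0, h1} E {{P0 ! 0, h1}}" by (rule pm_edge) (use F(10) la e1 in auto)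
  have m2: "perfect_matching {h0, P1 ! 0} E {{h0, P1 ! 0}}" by (rule pm_edge) (use F(11) la e1 in auto)
  have dj: "{P0 ! 0, h1} \<inter> {h0, P1 ! 0} = {}" using F(3,7,9,12) la by auto
  note MS = pm_union[OF m1 m2 dj]
  have SV: "S \<subseteq> V" unfolding S_def using F(13) la by auto
  have inj0: "\<And>t. t < length P0 \<Longrightarrow> P0 ! t \<in> S \<longleftrightarrow> t = 0"
  proof -
    fix t assume t: "t < length P0"
    then have "P0 ! t \<in> set P0" by simp
    then have "P0 ! t \<noteq> h1" "P0 ! t \<noteq> h0" "P0 ! t \<noteq> P1 ! 0" using F(3,10,12) la by auto
    then show "P0 ! t \<in> S \<longleftrightarrow> t = 0" unfolding S_def using t ab F(1) by (auto simp: nth_eq_iff_index_eq)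
  qed
  have inj1: "\<And>t. t < length P1 \<Longrightarrow> P1 ! t \<in> S \<longleftrightarrow> t = 0"
  proof -
    fix t assume t: "t < length P1"
    then have "P1 ! t \<in> set P1" by simp
    then have "P1 ! t \<noteq> h1" "P1 ! t \<noteq> h0" "P1 ! t \<noteq> P0 ! 0" using F(7,11,12) la by auto
    then show "P1 ! t \<in> S \<longleftrightarrow> t = 0" unfolding S_def using t ab F(5) by (auto simp: nth_eq_iff_index_eq)
  qed
  have g0: "goodI (\<lambda>t. P0 ! t \<in> S) (length P0 - 1) 0 0" by (rule goodI_single) (use F(1) ab inj0 in auto)
  have g1: "goodI (\<lambda>t. P1 ! t \<in> S) (length P1 - 1) 0 0" by (rule goodI_single) (use F(5) ab inj1 in auto)
  have H0: "has_perfect_matching ((set P0 \<union> {h0}) - S) (hbw_edges P0 h0)"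
    using shape_G2[OF F(1,2,3) _ g0] unfolding S_def by blast
  have H1: "has_perfect_matching ((set P1 \<union> {h1}) - S) (hbw_edges P1 h1)"
    using shape_G2[OF F(5,6,7) _ g1] unfolding S_def by blast
  have MS': "perfect_matching S E ({{P0 ! 0, h1}} \<union> {{h0, P1 ! 0}})" using MS unfolding S_def .
  obtain M where "perfect_matching V E M" "{{P0 ! 0, h1}} \<union> {{h0, P1 ! 0}} \<subseteq> M"
    using G_pm_S[OF G MS' SV H0 H1] by blast
  then show ?thesis using F(15,17) by auto
qed


lemma reach_side:
  assumes G: "G2d P0 h0 P1 h1 V E" and x: "x \<in> set P0 \<union> {h0}"
  shows "(h0, x) \<in> {(a, b). a \<in> V \<and> b \<in> V \<and> {a, b} \<in> E}\<^sup>*"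
proof -
  note F = G2d_facts[OF G]
  let ?R = "{(a, b). a \<in> V \<and> b \<in> V \<and> {a, b} \<in> E}"
  have hub: "(h0, P0 ! t) \<in> ?R" if "t < length P0" "even t" for t
  proof -
    have "{h0, P0 ! t} \<in> E" using hub_edge[OF that, of h0] F(14) by auto
    moreover have "h0 \<in> V" "P0 ! t \<in> V" using F(13) that by auto
    ultimately show ?thesis by auto
  qed
  show ?thesis
  proof (cases "x = h0")
    case True then show ?thesis by simp
  next
    case False
    then obtain t where t: "t < length P0" "x = P0 ! t" using x by (auto simp: in_set_conv_nth)
    show ?thesis
    proof (cases "even t")
      case True then show ?thesis using hub[OF t(1) True] t(2) by auto
    next
      case False
      then obtain r where r: "t = Suc r" "even r" by (cases t) auto
      have rl: "r < length P0" using t r by linarith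
      have e: "{P0 ! r, P0 ! Suc r} \<in> E" using path_edge[of r P0 h0] t r F(14) by auto
      have "(P0 ! r, P0 ! Suc r) \<in> ?R" using e F(13) t r rl by auto
      then show ?thesis using hub[OF rl r(2)] t r
        by (meson converse_rtrancl_into_rtrancl r_into_rtrancl)
    qed
  qed
qed

lemma G_connected:
  assumes G: "G2d P0 h0 P1 h1 V E"
  shows "graph_connected V E"
  unfolding graph_connected_def
proof (intro ballI)
  note F = G2d_facts[OF G]
  let ?R = "{(a, b). a \<in> V \<and> b \<in> V \<and> {a, b} \<in> E}"
  have sR: "sym ?R" unfolding sym_def by (auto simp: insert_commute)
  have s: "sym (?R\<^sup>*)" by (rule sym_rtrancl[OF sR])
  have h01: "(h0, h1) \<in> ?R" using F(13,14) by (auto simp: insert_commute)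
  have all: "(h0, y) \<in> ?R\<^sup>*" if y: "y \<in> V" for y
  proof -
    have "y \<in> set P0 \<union> {h0} \<or> y \<in> set P1 \<union> {h1}" using y F(13) by auto
    then show ?thesis
    proof
      assume "y \<in> set P0 \<union> {h0}" then show ?thesis by (rule reach_side[OF G])
    next
      assume "y \<in> set P1 \<union> {h1}"
      then have "(h1, y) \<in> ?R\<^sup>*" by (rule reach_side[OF G2d_swap[OF G]])
      then show ?thesis using h01 by (meson converse_rtrancl_into_rtrancl)
    qed
  qed
  fix x y assume "x \<in> V" "y \<in> V"
  have "(x, h0) \<in> ?R\<^sup>*" using all[OF \<open>x \<in> V\<close>] s by (meson symD)
  then show "(x, y) \<in> ?R\<^sup>*" using all[OF \<open>y \<in> V\<close>] by (meson rtrancl_trans)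
qed

theorem proposition5p11:
  fixes V :: "'a set" and E :: "'a set set"
  assumes "in_G2 V E"
  shows "cycle_extendable V E"
proof -
  obtain P0 h0 P1 h1 where G: "G2d P0 h0 P1 h1 V E" using in_G2_G2d[OF assms] by blast
  note F = G2d_facts[OF G]
  have fin: "finite V" using F(13) by simp
  have c2: "2 \<le> card V"
  proof -
    have "{h0, h1} \<subseteq> V" using F(13) by auto
    then have "card {h0, h1} \<le> card V" using fin by (rule card_mono[rotated])
    then show ?thesis using F(9) by simp
  qed
  have edges: "\<exists>M. perfect_matching V E M \<and> e \<in> M" if e: "e \<in> E" for e
  proof -
    consider "e \<in> hbw_edges P0 h0" | "e \<in> hbw_edges P1 h1" | "e = {h1, h0}" | "e = {last P1, last P0}"
      | "e = {hd P0, h1}" | "e = {h0, hd P1}" using e F(14) by blast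
    then show ?thesis
    proof cases
      case 1 then show ?thesis by (rule G_side_edge[OF G])
    next
      case 2 then show ?thesis by (rule G_side_edge[OF G2d_swap[OF G]])
    next
      case 3 then show ?thesis using G_cross_top[OF G] by blast
    next
      case 4 then show ?thesis using G_cross_top[OF G] by blast
    next
      case 5 then show ?thesis using G_cross_bot[OF G] by blast
    next
      case 6 then show ?thesis using G_cross_bot[OF G] by blast
    qed
  qed
  have mc: "matching_covered V E"
    unfolding matching_covered_def using G_connected[OF G] c2 fin edges by blast
  show ?thesis unfolding cycle_extendable_def using mc even_cycle_ok[OF G] by blast
qed

end
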